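(* Let $q\ge 2$. The additive group $\mathbb{Z}[\tfrac1q]$ has uncountably many submonoids.
   Context: $\mathbb{Z}[\tfrac1q]=\{nq^i: n,i\in\mathbb{Z}\}$, viewed as an additive group; a submonoid is a subset containing $0$ and closed under addition. *)

theory Defs
  imports "HOL-Analysis.Analysis"
begin

definition Zinv :: "int \<Rightarrow> rat set" where
  "Zinv q = {of_int n * (of_int q) powi i | n i. True}"

definition add_submonoid_of :: "rat set \<Rightarrow> rat set \<Rightarrow> bool" where
  "add_submonoid_of G M \<longleftrightarrow> M \<subseteq> G \<and> 0 \<in> M \<and> (\<forall>x\<in>M. \<forall>y\<in>M. x + y \<in> M)"

end

theory Submission
  imports Defs
begin

lemma Zinv_char:
  assumes "q \<ge> 2"
  shows "x \<in> Zinv q \<longleftrightarrow> (\<exists>n (k::nat). x = of_int n / of_int q ^ k)"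
proof
  assume "x \<in> Zinv q"
  then obtain n i where x: "x = of_int n * (of_int q) powi i" unfolding Zinv_def by blast
  show "\<exists>n (k::nat). x = of_int n / of_int q ^ k"
  proof (cases "i \<ge> 0")
    case True
    then have "x = of_int (n * q ^ nat i) / of_int q ^ 0"
      using x by (simp add: power_int_def)
    then show ?thesis by blast
  next
    case False
    then have "x = of_int n / of_int q ^ nat (-i)"
      using x by (simp add: power_int_def field_simps)
    then show ?thesis by blast
  qed
next
  assume "\<exists>n (k::nat). x = of_int n / of_int q ^ k"
  then obtain n and k :: nat where x: "x = of_int n / of_int q ^ k" by blast
  have "x = of_int n * (of_int q) powi (- int k)"
    using x by (simp add: power_int_minus divide_inverse)
  then show "x \<in> Zinv q" unfolding Zinv_def by blast
qed

lemma Zinv_add: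
  assumes "q \<ge> 2" "x \<in> Zinv q" "y \<in> Zinv q"
  shows "x + y \<in> Zinv q"
proof -
  obtain n k where x: "x = of_int n / (of_int q :: rat) ^ k" using assms Zinv_char by blast
  obtain m l where y: "y = of_int m / (of_int q :: rat) ^ l" using assms Zinv_char by blast
  have qn: "(of_int q :: rat) \<noteq> 0" using assms by simp
  have "x + y = of_int (n * q ^ l + m * q ^ k) / of_int q ^ (k + l)"
    using qn by (simp add: x y field_simps power_add)
  then show ?thesis using Zinv_char[OF assms(1)] by blast
qed

lemma density:
  assumes "q \<ge> 2" "r < s"
  shows "\<exists>x \<in> Zinv q. r < real_of_rat x \<and> real_of_rat x < s"
proof -
  have "(1::real) < of_int q" using assms by simp
  then obtain k where k: "1 / (s - r) < (of_int q :: real) ^ k" using real_arch_pow by blast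
  define Q where "Q = (of_int q :: real) ^ k"
  have Qp: "Q > 0" using assms unfolding Q_def by simp
  have "1 < (s - r) * Q" using k assms Qp unfolding Q_def[symmetric]
    by (simp add: field_simps)
  define n where "n = floor (r * Q) + 1"
  have n1: "r * Q < of_int n" unfolding n_def by linarith
  have n2: "of_int n < s * Q" unfolding n_def using \<open>1 < (s - r) * Q\<close>
    by (simp add: algebra_simps) linarith
  define x where "x = (of_int n / of_int q ^ k :: rat)"
  have xr: "real_of_rat x = of_int n / Q" unfolding x_def Q_def
    by (simp add: of_rat_divide of_rat_power)
  have "x \<in> Zinv q" using Zinv_char[OF assms(1)] x_def by blast
  moreover have "r < real_of_rat x" using n1 Qp unfolding xr by (simp add: pos_less_divide_eq mult.commute)
  moreover have "real_of_rat x < s" using n2 Qp unfolding xr by (simp add: pos_divide_less_eq mult.commute)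
  ultimately show ?thesis by blast
qed

theorem mainTheorem9:
  fixes q :: int
  assumes "q \<ge> 2"
  shows "uncountable {M. add_submonoid_of (Zinv q) M}"
proof
  assume c: "countable {M. add_submonoid_of (Zinv q) M}"
  define F where "F r = insert 0 {x \<in> Zinv q. real_of_rat x > r}" for r :: real
  have z: "0 \<in> Zinv q" using Zinv_char[OF assms] by force
  have sub: "add_submonoid_of (Zinv q) (F r)" if "r > 0" for r
    unfolding add_submonoid_of_def F_def
  proof (intro conjI ballI)
    fix x y assume x: "x \<in> insert 0 {x \<in> Zinv q. r < real_of_rat x}"
      and y: "y \<in> insert 0 {x \<in> Zinv q. r < real_of_rat x}"
    show "x + y \<in> insert 0 {x \<in> Zinv q. r < real_of_rat x}"
    proof (cases "x = 0 \<or> y = 0")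
      case True then show ?thesis using x y by auto
    next
      case False
      then have "x \<in> Zinv q" "y \<in> Zinv q" "r < real_of_rat x" "r < real_of_rat y"
        using x y by auto
      then show ?thesis using Zinv_add[OF assms] that by (auto simp: of_rat_add)
    qed
  qed (use z in auto)
  have inj: "inj_on F {0<..<1}"
  proof (rule linorder_inj_onI)
    fix r s assume rs: "(r::real) < s" and r0: "r \<in> {0<..<1}"
    obtain x where x: "x \<in> Zinv q" "r < real_of_rat x" "real_of_rat x < s"
      using density[OF assms rs] by blast
    show "F r \<noteq> F s"
    proof
      assume "F r = F s"
      moreover have "x \<in> F r" using x unfolding F_def by auto
      moreover have "x \<noteq> 0" using x r0 by auto
      ultimately have "s < real_of_rat x" unfolding F_def by auto
      then show False using x by simp
    qed
  qed auto
  have "F ` {0<..<1} \<subseteq> {M. add_submonoid_of (Zinv q) M}" using sub by auto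
  then have "countable (F ` {0<..<1})" using c countable_subset by blast
  then have "countable {0<..<(1::real)}" using inj countable_image_inj_on by blast
  then show False using uncountable_open_interval[of 0 "1::real"] by simp
qed

end
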